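(* Let $d\ge1$ and let $f:\mathbb{R}^d\to\mathbb{R}$ be additive, i.e. $f(x+y)=f(x)+f(y)$ for all $x,y\in\mathbb{R}^d$, and let $G(f)=\{(x,f(x)):x\in\mathbb{R}^d\}\subseteq\mathbb{R}^{d+1}$. (a) There exists $s\in\{0,1,\dots,d+1\}$ and an $s$-dimensional vector subspace $V\subseteq\mathbb{R}^{d+1}$ such that the connected component $G$ of $G(f)$ containing the origin is a subgroup of $V$ which is dense in $V$. Moreover, every connected component of $G(f)$ is of the form $\tau+G$ for some $\tau\in\mathbb{R}^{d+1}$. (b) For every $s\in\{0,1,\dots,d+1\}$ there exists an additive function $f:\mathbb{R}^d\to\mathbb{R}$ for which the number $s$ in (a) takes this value.
   Context: $\mathbb{R}^{d+1}$ carries the Euclidean topology and $G(f)$ the subspace topology; connected components are taken in $G(f)$. *)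

theory Defs
  imports "HOL-Analysis.Analysis"
begin

text \<open>The graph G(f) of f : R^d -> R, as a subset of R^d x R (= R^(d+1)).\<close>
definition fgraph :: "(real^'n \<Rightarrow> real) \<Rightarrow> ((real^'n) \<times> real) set" where
  "fgraph f = {(x, f x) | x. True}"

definition comp_struct :: "(real^'n \<Rightarrow> real) \<Rightarrow> nat \<Rightarrow> ((real^'n) \<times> real) set \<Rightarrow> bool" where
  "comp_struct f s V \<longleftrightarrow>
     (let G = connected_component_set (fgraph f) 0 in
        subspace V \<and> dim V = s \<and>
        G \<subseteq> V \<and> 0 \<in> G \<and> (\<forall>x\<in>G. \<forall>y\<in>G. x + y \<in> G) \<and> (\<forall>x\<in>G. - x \<in> G) \<and>
        V \<subseteq> closure G \<and>
        (\<forall>C\<in>components (fgraph f). \<exists>\<tau>. C = (\<lambda>g. \<tau> + g) ` G))"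

end

theory Submission
  imports Defs "HOL-Library.Equipollence"
begin


lemma additive_basics:
  fixes f :: "'a::real_vector \<Rightarrow> real"
  assumes "Modules.additive f"
  shows additive_zero: "f 0 = 0" and additive_add: "f (x + y) = f x + f y"
    and additive_neg: "f (- x) = - f x"
proof -
  show add: "f (x + y) = f x + f y" for x y using assms by (simp add: Modules.additive_def)
  show z: "f 0 = 0" using add[of 0 0] by simp
  show "f (- x) = - f x" using add[of x "-x"] z by simp
qed

lemma additive_int_scale:
  fixes f :: "'a::real_vector \<Rightarrow> real"
  assumes "Modules.additive f"
  shows "f (of_int k *\<^sub>R x) = of_int k * f x"
proof -
  have n: "f (of_nat n *\<^sub>R x) = of_nat n * f x" for n
    by (induction n) (auto simp: additive_zero[OF assms] additive_add[OF assms] algebra_simps)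
  show ?thesis
  proof (cases "k \<ge> 0")
    case True then show ?thesis using n[of "nat k"] by simp
  next
    case False
    then have "of_int k *\<^sub>R x = - (of_nat (nat (-k)) *\<^sub>R x)" by simp
    then show ?thesis using n[of "nat (-k)"] False additive_neg[OF assms] by simp
  qed
qed

lemma additive_rat_scale:
  fixes f :: "'a::real_vector \<Rightarrow> real"
  assumes "Modules.additive f"
  shows "f (of_rat q *\<^sub>R x) = of_rat q * f x"
proof -
  obtain a b where ab: "quotient_of q = (a, b)" by (cases "quotient_of q") auto
  have q: "q = of_int a / of_int b" using quotient_of_div[OF ab] .
  have b: "b > 0" using quotient_of_denom_pos[OF ab] .
  have qr: "of_rat q = real_of_int a / real_of_int b" using q by (simp add: of_rat_divide)
  have "of_int b * f (of_rat q *\<^sub>R x) = f (of_int b *\<^sub>R (of_rat q *\<^sub>R x))"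
    by (rule additive_int_scale[OF assms, symmetric])
  also have "of_int b *\<^sub>R (of_rat q *\<^sub>R x) = of_int a *\<^sub>R x" using b by (simp add: qr)
  also have "f \<dots> = of_int a * f x" using additive_int_scale[OF assms] by simp
  finally show ?thesis using b by (simp add: qr field_simps)
qed

lemma graph_add:
  fixes f :: "'a::real_vector \<Rightarrow> real"
  assumes "Modules.additive f" "u \<in> {(x, f x) | x. True}" "v \<in> {(x, f x) | x. True}"
  shows "u + v \<in> {(x, f x) | x. True}"
  using assms additive_add[OF assms(1)] by auto

lemma graph_neg:
  fixes f :: "'a::real_vector \<Rightarrow> real"
  assumes "Modules.additive f" "u \<in> {(x, f x) | x. True}"
  shows "- u \<in> {(x, f x) | x. True}"
  using assms additive_neg[OF assms(1)] by force

lemma graph_scale: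
  fixes f :: "'a::real_vector \<Rightarrow> real"
  assumes "Modules.additive f" "u \<in> {(x, f x) | x. True}"
  shows "of_rat q *\<^sub>R u \<in> {(x, f x) | x. True}"
  using assms additive_rat_scale[OF assms(1)] by force

lemma closure_rat_closed_subspace:
  fixes G :: "'b::euclidean_space set"
  assumes z: "0 \<in> G" and ad: "\<And>x y. x \<in> G \<Longrightarrow> y \<in> G \<Longrightarrow> x + y \<in> G"
    and sc: "\<And>q x. x \<in> G \<Longrightarrow> of_rat q *\<^sub>R x \<in> G"
  shows "subspace (closure G)"
proof -
  have cadd: "x + y \<in> closure G" if "x \<in> closure G" "y \<in> closure G" for x y
  proof -
    have c: "continuous_on (closure (G \<times> G)) (\<lambda>p. fst p + snd p)"
      by (intro continuous_intros)
    have "(\<lambda>p. fst p + snd p) ` (G \<times> G) \<subseteq> closure G"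
      using ad closure_subset by fastforce
    then have "(\<lambda>p. fst p + snd p) ` closure (G \<times> G) \<subseteq> closure G"
      using image_closure_subset[OF c closed_closure] by blast
    moreover have "(x,y) \<in> closure (G \<times> G)" using that by (simp add: closure_Times)
    ultimately show ?thesis by (metis (no_types, lifting) fst_conv snd_conv image_subset_iff)
  qed
  have cq: "of_rat q *\<^sub>R x \<in> closure G" if "x \<in> closure G" for q x
  proof -
    have c: "continuous_on (closure G) (\<lambda>x. of_rat q *\<^sub>R x)"
      by (intro continuous_intros)
    have "(\<lambda>x. of_rat q *\<^sub>R x) ` G \<subseteq> closure G"
      using sc closure_subset by fastforce
    then have "(\<lambda>x. of_rat q *\<^sub>R x) ` closure G \<subseteq> closure G"
      using image_closure_subset[OF c closed_closure] by blast
    then show ?thesis using that by blast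
  qed
  have csc: "c *\<^sub>R x \<in> closure G" if "x \<in> closure G" for c x
  proof -
    have cl: "closed ((\<lambda>c. c *\<^sub>R x) -` closure G)"
      by (rule continuous_closed_vimage) (auto intro: continuous_intros)
    have "\<rat> \<subseteq> (\<lambda>c. c *\<^sub>R x) -` closure G"
    proof
      fix c :: real assume "c \<in> \<rat>"
      then obtain q where "c = of_rat q" by (auto elim: Rats_cases)
      then show "c \<in> (\<lambda>c. c *\<^sub>R x) -` closure G" using cq[OF that] by simp
    qed
    then have "closure \<rat> \<subseteq> (\<lambda>c. c *\<^sub>R x) -` closure G"
      using cl closure_minimal by blast
    then show ?thesis by (simp add: Rats_closure_real subset_eq)
  qed
  show ?thesis unfolding subspace_def
  proof (intro conjI ballI allI)
    show "0 \<in> closure G" using z closure_subset by blast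
  qed (use cadd csc in auto)
qed



lemma part_a_generic:
  fixes f :: "'a::euclidean_space \<Rightarrow> real"
  assumes add: "Modules.additive f"
  defines "\<Gamma> \<equiv> {(x, f x) | x. True}"
  defines "G \<equiv> connected_component_set \<Gamma> 0"
  shows "subspace (closure G) \<and> G \<subseteq> closure G \<and> 0 \<in> G \<and> (\<forall>x\<in>G. \<forall>y\<in>G. x + y \<in> G)
     \<and> (\<forall>x\<in>G. - x \<in> G) \<and> (\<forall>C\<in>components \<Gamma>. \<exists>\<tau>. C = (\<lambda>g. \<tau> + g) ` G)"
proof -
  have z\<Gamma>: "0 \<in> \<Gamma>" using additive_zero[OF add] unfolding \<Gamma>_def
    by (auto intro!: exI[of _ 0] simp: zero_prod_def)
  have z: "0 \<in> G" unfolding G_def using z\<Gamma> by simp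
  have G\<Gamma>: "G \<subseteq> \<Gamma>" unfolding G_def by (rule connected_component_subset)
  have cG: "connected G" unfolding G_def by simp
  have gadd: "u + v \<in> \<Gamma>" if "u \<in> \<Gamma>" "v \<in> \<Gamma>" for u v
    using graph_add[OF add] that unfolding \<Gamma>_def by blast
  have gneg: "- u \<in> \<Gamma>" if "u \<in> \<Gamma>" for u
    using graph_neg[OF add] that unfolding \<Gamma>_def by blast
  have gsc: "of_rat q *\<^sub>R u \<in> \<Gamma>" if "u \<in> \<Gamma>" for u q
    using graph_scale[OF add] that unfolding \<Gamma>_def by blast
  have transl: "(\<lambda>g. \<tau> + g) ` G \<subseteq> connected_component_set \<Gamma> \<tau>" if "\<tau> \<in> \<Gamma>" for \<tau>
  proof (rule connected_component_maximal)
    show "\<tau> \<in> (\<lambda>g. \<tau> + g) ` G" using z by force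
    show "connected ((\<lambda>g. \<tau> + g) ` G)" by (rule connected_continuous_image[OF continuous_on_add[OF continuous_on_const continuous_on_id] cG])
    show "(\<lambda>g. \<tau> + g) ` G \<subseteq> \<Gamma>" using G\<Gamma> gadd that by blast
  qed
  have Gadd: "x + y \<in> G" if "x \<in> G" "y \<in> G" for x y
  proof -
    have "connected_component_set \<Gamma> x = G" unfolding G_def
      using that(1) unfolding G_def by (rule connected_component_eq)
    then show ?thesis using transl[of x] that G\<Gamma> by blast
  qed
  have Gsc: "of_rat q *\<^sub>R x \<in> G" if "x \<in> G" for q x
  proof -
    have "(\<lambda>x. of_rat q *\<^sub>R x) ` G \<subseteq> connected_component_set \<Gamma> 0"
    proof (rule connected_component_maximal)
      show "0 \<in> (\<lambda>x. of_rat q *\<^sub>R x) ` G" using z by force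
      show "connected ((\<lambda>x. of_rat q *\<^sub>R x) ` G)"
        by (rule connected_continuous_image[OF _ cG]) (intro continuous_intros)
      show "(\<lambda>x. of_rat q *\<^sub>R x) ` G \<subseteq> \<Gamma>" using G\<Gamma> gsc by blast
    qed
    then show ?thesis using that unfolding G_def[symmetric] by blast
  qed
  have Gneg: "- x \<in> G" if "x \<in> G" for x
    using Gsc[of x "-1"] that by simp
  have comps: "\<exists>\<tau>. C = (\<lambda>g. \<tau> + g) ` G" if hC: "C \<in> components \<Gamma>" for C
  proof -
    obtain x where x: "x \<in> \<Gamma>" and C: "C = connected_component_set \<Gamma> x"
      using hC unfolding components_iff by blast
    have "(\<lambda>c. - x + c) ` C \<subseteq> connected_component_set \<Gamma> 0"
    proof (rule connected_component_maximal)
      show "0 \<in> (\<lambda>c. - x + c) ` C" using x C by (auto intro!: image_eqI[of _ _ x])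
      show "connected ((\<lambda>c. - x + c) ` C)" by (rule connected_continuous_image[OF continuous_on_add[OF continuous_on_const continuous_on_id]]) (simp add: C)
      show "(\<lambda>c. - x + c) ` C \<subseteq> \<Gamma>"
        using gadd gneg x connected_component_subset[of \<Gamma> x] C by blast
    qed
    then have "C \<subseteq> (\<lambda>g. x + g) ` G"
      unfolding G_def[symmetric] by (auto intro!: image_eqI[where x="- x + _"] simp: image_subset_iff)
    moreover have "(\<lambda>g. x + g) ` G \<subseteq> C" using transl[OF x] C by simp
    ultimately show ?thesis by blast
  qed
  have "subspace (closure G)"
    by (rule closure_rat_closed_subspace[OF z Gadd Gsc])
  then show ?thesis using closure_subset z Gadd Gneg comps by blast
qed



interpretation qv: vector_space "(\<lambda>q::rat. \<lambda>x::real. of_rat q * x)"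
  by unfold_locales (auto simp: algebra_simps of_rat_add of_rat_mult)

interpretation qvp: vector_space_pair "(\<lambda>q::rat. \<lambda>x::real. of_rat q * x)" "(\<lambda>q::rat. \<lambda>x::real. of_rat q * x)"
  by unfold_locales

lemma qsub_interval:
  assumes S: "qv.subspace S" and ab: "a < b" and I: "{a<..<b} \<subseteq> S"
  shows "S = UNIV"
proof -
  define m where "m = (a + b) / 2"
  define d where "d = (b - a) / 2"
  have d: "d > 0" using ab by (simp add: d_def)
  have mS: "m \<in> S" using I ab by (auto simp: m_def)
  have small: "t \<in> S" if "\<bar>t\<bar> < d" for t
  proof -
    have "m + t \<in> {a<..<b}" using that by (auto simp: m_def d_def abs_less_iff field_simps)
    then have "m + t \<in> S" using I by blast
    then have "(m + t) + of_rat (-1) * m \<in> S"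
      using mS S qv.subspace_add qv.subspace_scale by blast
    then show ?thesis by simp
  qed
  have "x \<in> S" for x
  proof -
    obtain n :: nat where n: "\<bar>x\<bar> / d < real n" using reals_Archimedean2 by blast
    then have npos: "n > 0" using d by (cases n) (auto simp: divide_less_0_iff)
    have "\<bar>x / real n\<bar> < d" using n d npos by (simp add: field_simps abs_divide)
    then have "x / real n \<in> S" by (rule small)
    then have "of_rat (of_nat n) * (x / real n) \<in> S" using S qv.subspace_scale by blast
    then show ?thesis using npos by simp
  qed
  then show ?thesis by auto
qed

primrec spanlev :: "real set \<Rightarrow> nat \<Rightarrow> real set" where
  "spanlev X 0 = {0}"
| "spanlev X (Suc n) = (\<lambda>(s,q,x). of_rat q * x + s) ` (spanlev X n \<times> (UNIV::rat set) \<times> X)"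

lemma span_sub_spanlev: "qv.span X \<subseteq> (\<Union>n. spanlev X n)"
proof
  fix v assume "v \<in> qv.span X"
  then show "v \<in> (\<Union>n. spanlev X n)"
  proof (induction rule: qv.span_induct_alt)
    case base
    then show ?case by (auto intro!: exI[of _ 0])
  next
    case (step c x y)
    then obtain n where "y \<in> spanlev X n" by blast
    then have "of_rat c * x + y \<in> spanlev X (Suc n)" using step(1)
      by (auto intro!: image_eqI[where x="(y, c, x)"])
    then show ?case by blast
  qed
qed

lemma lepoll_card_of: "A \<lesssim> B \<longleftrightarrow> ordLeq3 (card_of A) (card_of B)"
  unfolding lepoll_def by (simp add: card_of_ordLeq[symmetric])

lemma times_lepoll_infinite:
  assumes Y: "infinite Y" and A: "A \<lesssim> Y" and B: "B \<lesssim> Y"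
  shows "A \<times> B \<lesssim> Y"
proof -
  have "A \<times> B \<lesssim> Y \<times> Y" using A B by (rule times_lepoll_mono)
  moreover have "Y \<times> Y \<lesssim> Y"
    using card_of_Times_same_infinite[OF Y] unfolding lepoll_card_of ordIso_iff_ordLeq by (rule conjunct1)
  ultimately show ?thesis by (rule lepoll_trans)
qed

lemma rat_lepoll_infinite:
  assumes Y: "infinite Y" shows "(UNIV::rat set) \<lesssim> Y"
proof -
  have "(UNIV::rat set) \<lesssim> (UNIV::nat set)"
    unfolding lepoll_def by (intro exI[of _ to_nat]) auto
  also have "(UNIV::nat set) \<lesssim> Y" using Y infinite_le_lepoll by blast
  finally show ?thesis .
qed

lemma span_lepoll:
  assumes Y: "infinite Y" and X: "X \<lesssim> Y"
  shows "qv.span X \<lesssim> Y"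
proof -
  have lev: "spanlev X n \<lesssim> Y" for n
  proof (induction n)
    case 0
    then show ?case using Y by (simp add: finite_lepoll_infinite)
  next
    case (Suc n)
    have "spanlev X n \<times> (UNIV::rat set) \<times> X \<lesssim> Y"
      using Suc Y X rat_lepoll_infinite by (intro times_lepoll_infinite) auto
    moreover have "spanlev X (Suc n) \<lesssim> spanlev X n \<times> (UNIV::rat set) \<times> X"
      unfolding spanlev.simps by (rule image_lepoll)
    ultimately show ?case by (rule lepoll_trans[rotated])
  qed
  have "ordLeq3 (card_of (\<Union>n\<in>(UNIV::nat set). spanlev X n)) (card_of Y)"
    using lev Y infinite_le_lepoll[of Y] unfolding lepoll_card_of
    by (intro card_of_UNION_ordLeq_infinite) auto
  then have "(\<Union>n. spanlev X n) \<lesssim> Y" unfolding lepoll_card_of by simp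
  then show ?thesis by (rule lepoll_trans[OF subset_imp_lepoll[OF span_sub_spanlev]])
qed

lemma span_small:
  assumes X: "ordLess2 (card_of X) (card_of (UNIV::real set))"
  shows "qv.span X \<noteq> UNIV"
proof (cases "finite X")
  case True
  then have "X \<lesssim> (UNIV::nat set)" by (simp add: finite_lepoll_infinite)
  then have "qv.span X \<lesssim> (UNIV::nat set)" by (intro span_lepoll) auto
  then have "countable (qv.span X)" by (rule countable_lepoll[rotated]) simp
  then show ?thesis using uncountable_UNIV_real by auto
next
  case False
  then have "qv.span X \<lesssim> X" by (intro span_lepoll) auto
  then have "ordLeq3 (card_of (qv.span X)) (card_of X)" unfolding lepoll_card_of .
  then have "ordLess2 (card_of (qv.span X)) (card_of (UNIV::real set))"
    using X ordLeq_ordLess_trans by blast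
  then show ?thesis using ordLess_irreflexive by fastforce
qed



definition jreq :: "(real \<times> real) set set" where
  "jreq = {K. closed K \<and> (\<exists>a b. a < b \<and> {a<..<b} \<subseteq> fst ` K)}"

lemma UNIV_jreq: "UNIV \<in> jreq"
proof -
  have "x \<in> fst ` (UNIV::(real \<times> real) set)" for x by (rule image_eqI[of _ _ "(x,0)"]) auto
  then have "{0<..<1} \<subseteq> fst ` (UNIV::(real \<times> real) set)" by blast
  then show ?thesis unfolding jreq_def
    by (intro CollectI conjI closed_UNIV exI[of _ "0::real"] exI[of _ "1::real"]) auto
qed

lemma jreq_lepoll: "jreq \<lesssim> (UNIV::real set)"
proof -
  obtain \<B> :: "(real \<times> real) set set" where B: "countable \<B>" "\<And>C. C \<in> \<B> \<Longrightarrow> open C"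
       "\<And>S. open S \<Longrightarrow> \<exists>U. U \<subseteq> \<B> \<and> S = \<Union>U"
    using univ_second_countable by blast
  define \<phi> where "\<phi> K = {C\<in>\<B>. C \<subseteq> - K}" for K :: "(real \<times> real) set"
  have rec: "- K = \<Union>(\<phi> K)" if cK: "closed K" for K
  proof -
    obtain U where "U \<subseteq> \<B>" "- K = \<Union>U" using B(3)[OF open_Compl[OF cK]] by blast
    then show ?thesis unfolding \<phi>_def by blast
  qed
  have inj: "inj_on \<phi> jreq"
  proof (rule inj_onI)
    fix K L assume "K \<in> jreq" "L \<in> jreq" "\<phi> K = \<phi> L"
    then have "- K = - L" using rec unfolding jreq_def by auto
    then show "K = L" by simp
  qed
  have "jreq \<lesssim> Pow \<B>" unfolding lepoll_def
    by (intro exI[of _ \<phi>]) (auto simp: inj \<phi>_def)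
  also have "Pow \<B> \<lesssim> (UNIV::nat set set)"
  proof -
    have "inj_on (to_nat_on \<B>) \<B>" using B(1) by (rule inj_on_to_nat_on)
    then have "inj_on (\<lambda>A. to_nat_on \<B> ` A) (Pow \<B>)"
      by (auto simp: inj_on_def inj_on_image_eq_iff)
    then show ?thesis unfolding lepoll_def by blast
  qed
  also have "(UNIV::nat set set) \<lesssim> (UNIV::real set)"
    using nat_sets_eqpoll_reals by (rule eqpoll_imp_lepoll)
  finally show ?thesis .
qed

abbreviation "rR \<equiv> card_of (UNIV::real set)"

definition jstep :: "(real \<Rightarrow> (real \<times> real) set) \<Rightarrow> (real \<Rightarrow> real \<times> real) \<Rightarrow> real \<Rightarrow> real \<times> real" where
  "jstep \<sigma> rec a = (SOME p. p \<in> \<sigma> a \<and> fst p \<notin> qv.span ((\<lambda>b. fst (rec b)) ` underS rR a))"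

definition jpts :: "(real \<Rightarrow> (real \<times> real) set) \<Rightarrow> real \<Rightarrow> real \<times> real" where
  "jpts \<sigma> = wfrec (rR - Id) (jstep \<sigma>)"

lemma wo_rR: "wo_rel rR"
  unfolding wo_rel_def by (rule card_of_Well_order)

lemma Field_rR: "Field rR = UNIV" by (rule Field_card_of)

lemma jpts_eq: "jpts \<sigma> a = jstep \<sigma> (jpts \<sigma>) a"
proof -
  have "jpts \<sigma> a = jstep \<sigma> (cut (jpts \<sigma>) (rR - Id) a) a"
    unfolding jpts_def by (rule wfrec[OF wo_rel.WF[OF wo_rR]])
  also have "\<dots> = jstep \<sigma> (jpts \<sigma>) a"
  proof -
    have "(\<lambda>b. fst (cut (jpts \<sigma>) (rR - Id) a b)) ` underS rR a = (\<lambda>b. fst (jpts \<sigma> b)) ` underS rR a"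
      by (intro image_cong refl) (auto simp: underS_def cut_apply)
    then show ?thesis unfolding jstep_def by simp
  qed
  finally show ?thesis .
qed

lemma jpts_prop:
  assumes \<sigma>: "\<And>a. \<sigma> a \<in> jreq"
  shows "jpts \<sigma> a \<in> \<sigma> a \<and> fst (jpts \<sigma> a) \<notin> qv.span ((\<lambda>b. fst (jpts \<sigma> b)) ` underS rR a)"
proof -
  let ?X = "(\<lambda>b. fst (jpts \<sigma> b)) ` underS rR a"
  have "ordLeq3 (card_of ?X) (card_of (underS rR a))" by (rule card_of_image)
  moreover have "ordLess2 (card_of (underS rR a)) rR"
    by (rule card_of_underS[OF card_of_Card_order]) (simp add: Field_rR)
  ultimately have "ordLess2 (card_of ?X) rR" by (rule ordLeq_ordLess_trans)
  then have ne: "qv.span ?X \<noteq> UNIV" by (rule span_small)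
  obtain \<alpha> \<beta> where ab: "\<alpha> < \<beta>" "{\<alpha><..<\<beta>} \<subseteq> fst ` \<sigma> a"
    using \<sigma>[of a] unfolding jreq_def by blast
  have "\<not> {\<alpha><..<\<beta>} \<subseteq> qv.span ?X"
    using qsub_interval[OF qv.subspace_span ab(1)] ne by blast
  then obtain x where "x \<in> {\<alpha><..<\<beta>}" "x \<notin> qv.span ?X" by blast
  then obtain p where "p \<in> \<sigma> a" "fst p \<notin> qv.span ?X" using ab(2) by blast
  then have "\<exists>p. p \<in> \<sigma> a \<and> fst p \<notin> qv.span ?X" by blast
  then have "jstep \<sigma> (jpts \<sigma>) a \<in> \<sigma> a \<and> fst (jstep \<sigma> (jpts \<sigma>) a) \<notin> qv.span ?X"
    unfolding jstep_def by (rule someI_ex)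
  from this[folded jpts_eq] show ?thesis .
qed

lemma rR_max:
  assumes "finite A" "A \<noteq> {}"
  shows "\<exists>m\<in>A. \<forall>b\<in>A. (b, m) \<in> rR"
  using assms
proof (induction A rule: finite_ne_induct)
  case (singleton x)
  then show ?case using wo_rel.REFL[OF wo_rR] by (auto simp: refl_on_def Field_rR)
next
  case (insert x F)
  then obtain m where m: "m \<in> F" "\<forall>b\<in>F. (b, m) \<in> rR" by blast
  have tot: "(x, m) \<in> rR \<or> (m, x) \<in> rR" using wo_rel.TOTALS[OF wo_rR] by (simp add: Field_rR)
  have refl: "(x, x) \<in> rR" using wo_rel.REFL[OF wo_rR] by (auto simp: refl_on_def Field_rR)
  have tr: "trans rR" using wo_rel.TRANS[OF wo_rR] .
  show ?case
  proof (cases "(x, m) \<in> rR")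
    case True
    then show ?thesis using m by blast
  next
    case False
    then have "(m, x) \<in> rR" using tot by blast
    then have "\<forall>b\<in>insert x F. (b, x) \<in> rR" using m refl tr unfolding trans_def by blast
    then show ?thesis by blast
  qed
qed



lemma jind_finite:
  fixes xs :: "real \<Rightarrow> real"
  assumes P: "\<And>a. xs a \<notin> qv.span (xs ` underS rR a)"
  shows "finite A \<Longrightarrow> qv.independent (xs ` A)"
proof (induction "card A" arbitrary: A rule: less_induct)
  case less
  show ?case
  proof (cases "A = {}")
    case True show ?thesis unfolding True image_empty by (rule qv.independent_empty)
  next
    case False
    obtain m where m: "m \<in> A" "\<forall>b\<in>A. (b,m) \<in> rR" using rR_max[OF less.prems False] by blast
    let ?A' = "A - {m}"
    have "card A > 0" using m(1) less.prems card_gt_0_iff by blast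
    then have "card ?A' < card A" using m(1) less.prems by simp
    moreover have "finite ?A'" using less.prems by simp
    ultimately have ind: "qv.independent (xs ` ?A')" by (rule less.hyps)
    have sub: "?A' \<subseteq> underS rR m" using m by (auto simp: underS_def)
    have "xs m \<notin> qv.span (xs ` ?A')" using P[of m] qv.span_mono[OF image_mono[OF sub]] by blast
    then have ii: "qv.independent (insert (xs m) (xs ` ?A'))" using ind by (rule qv.independent_insertI)
    have e: "insert (xs m) (xs ` ?A') = xs ` A" using m(1) by blast
    from ii show ?thesis unfolding e .
  qed
qed

lemma jind:
  fixes xs :: "real \<Rightarrow> real"
  assumes P: "\<And>a. xs a \<notin> qv.span (xs ` underS rR a)"
  shows "qv.independent (range xs)"
  unfolding qv.independent_explicit_finite_subsets
proof (intro allI impI)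
  fix S u assume S: "S \<subseteq> range xs" "finite S" and su: "(\<Sum>v\<in>S. of_rat (u v) * v) = 0"
  obtain C where C: "finite C" "S = xs ` C" using finite_subset_image[OF S(2) S(1)] by blast
  have "qv.independent S" unfolding C(2) by (rule jind_finite[OF P C(1)])
  then show "\<forall>v\<in>S. u v = 0" using qv.independentD[OF _ S(2) subset_refl su] by blast
qed

lemma jinj:
  fixes xs :: "real \<Rightarrow> real"
  assumes P: "\<And>a. xs a \<notin> qv.span (xs ` underS rR a)"
  shows "inj xs"
proof (rule injI)
  fix a b assume eq: "xs a = xs b"
  show "a = b"
  proof (rule ccontr)
    assume ne: "a \<noteq> b"
    have "(a, b) \<in> rR \<or> (b, a) \<in> rR" using wo_rel.TOTALS[OF wo_rR] by (simp add: Field_rR)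
    then show False
    proof
      assume "(a, b) \<in> rR"
      then have "a \<in> underS rR b" using ne by (simp add: underS_def)
      then have "xs a \<in> qv.span (xs ` underS rR b)" by (intro qv.span_base imageI)
      then have "xs b \<in> qv.span (xs ` underS rR b)" by (simp only: eq)
      with P[of b] show False by contradiction
    next
      assume "(b, a) \<in> rR"
      then have "b \<in> underS rR a" using ne by (simp add: underS_def)
      then have "xs b \<in> qv.span (xs ` underS rR a)" by (intro qv.span_base imageI)
      then have "xs a \<in> qv.span (xs ` underS rR a)" by (simp only: eq)
      with P[of a] show False by contradiction
    qed
  qed
qed

theorem jones_exists: "\<exists>J::real \<Rightarrow> real. Modules.additive J \<and> (\<forall>K\<in>jreq. \<exists>x. (x, J x) \<in> K)"
proof -
  obtain g :: "real \<Rightarrow> (real \<times> real) set" where g: "jreq \<subseteq> range g" using jreq_lepoll unfolding lepoll_iff by blast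
  define \<sigma> where "\<sigma> a = (if g a \<in> jreq then g a else UNIV)" for a
  have \<sigma>: "\<sigma> a \<in> jreq" for a using UNIV_jreq by (simp add: \<sigma>_def)
  define xs where "xs = (\<lambda>a. fst (jpts \<sigma> a))"
  have P: "xs a \<notin> qv.span (xs ` underS rR a)" for a
    unfolding xs_def by (rule conjunct2[OF jpts_prop[OF \<sigma>]])
  have ind: "qv.independent (range xs)" by (rule jind[OF P])
  have inj: "inj xs" by (rule jinj[OF P])
  define J where "J = qvp.construct (range xs) (\<lambda>v. snd (jpts \<sigma> (inv xs v)))"
  have lin: "Vector_Spaces.linear (\<lambda>q::rat. \<lambda>x::real. of_rat q * x) (\<lambda>q::rat. \<lambda>x::real. of_rat q * x) J"
    unfolding J_def by (rule qvp.linear_construct[OF ind])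
  have add: "Modules.additive J" unfolding Modules.additive_def
    by (intro allI) (rule qvp.linear_add[OF lin])
  have Jx: "J (xs a) = snd (jpts \<sigma> a)" for a
  proof -
    have xa: "xs a \<in> range xs" by (rule rangeI)
    have "J (xs a) = (\<lambda>v. snd (jpts \<sigma> (inv xs v))) (xs a)"
      unfolding J_def by (rule qvp.construct_basis[OF ind xa])
    also have "\<dots> = snd (jpts \<sigma> a)" by (simp only: inv_f_f[OF inj])
    finally show ?thesis .
  qed
  have "\<exists>x. (x, J x) \<in> K" if K: "K \<in> jreq" for K
  proof -
    obtain a where "K = g a" using g K by blast
    then have "\<sigma> a = K" using K by (simp add: \<sigma>_def)
    moreover have "(xs a, J (xs a)) = jpts \<sigma> a" using Jx[of a] by (simp add: xs_def)
    moreover have "jpts \<sigma> a \<in> \<sigma> a" by (rule conjunct1[OF jpts_prop[of \<sigma> a, OF \<sigma>]])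
    ultimately have "(xs a, J (xs a)) \<in> K" by simp
    then show ?thesis by blast
  qed
  then show ?thesis using add by blast
qed



lemma conn_cross:
  assumes C: "connected C" and U: "open U" and W: "open W" and UW: "U \<inter> W = {}"
    and p: "p \<in> C" "p \<in> U" and q: "q \<in> C" "q \<in> W"
  shows "\<exists>z\<in>C. z \<notin> U \<union> W"
proof (rule ccontr)
  assume "\<not> (\<exists>z\<in>C. z \<notin> U \<union> W)"
  then have "C \<subseteq> U \<union> W" by blast
  moreover have "U \<inter> W \<inter> C = {}" using UW by auto
  ultimately have "U \<inter> C = {} \<or> W \<inter> C = {}" using connectedD[OF C U W] by blast
  then show False using p q by blast
qed

lemma disjoint_opens:
  fixes S :: "'a::metric_space set"
  assumes "\<not> connected S"
  shows "\<exists>U W. open U \<and> open W \<and> U \<inter> W = {} \<and> S \<subseteq> U \<union> W \<and> U \<inter> S \<noteq> {} \<and> W \<inter> S \<noteq> {}"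
proof -
  obtain A B where AB: "open A" "open B" "S \<subseteq> A \<union> B" "A \<inter> B \<inter> S = {}" "A \<inter> S \<noteq> {}" "B \<inter> S \<noteq> {}"
    using assms unfolding connected_def by blast
  define A0 where "A0 = A \<inter> S"
  define B0 where "B0 = B \<inter> S"
  have A0: "A0 \<noteq> {}" and B0: "B0 \<noteq> {}" using AB by (auto simp: A0_def B0_def)
  define U where "U = {x. infdist x A0 < infdist x B0}"
  define W where "W = {x. infdist x B0 < infdist x A0}"
  have oU: "open U" unfolding U_def
    by (rule open_Collect_less) (intro continuous_on_infdist continuous_on_id)+
  have oW: "open W" unfolding W_def
    by (rule open_Collect_less) (intro continuous_on_infdist continuous_on_id)+
  have UW: "U \<inter> W = {}" unfolding U_def W_def by auto
  have AU: "A0 \<subseteq> U"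
  proof
    fix x assume x: "x \<in> A0"
    have "A \<inter> B0 = {}" using AB(4) by (auto simp: B0_def)
    then have "A \<inter> closure B0 = {}" using open_Int_closure_eq_empty[OF AB(1)] by blast
    then have "x \<notin> closure B0" using x by (auto simp: A0_def)
    then have "infdist x B0 \<noteq> 0" using in_closure_iff_infdist_zero[OF B0] by blast
    then have "infdist x B0 > 0" using infdist_nonneg[of x B0] by linarith
    then show "x \<in> U" using x by (simp add: U_def)
  qed
  have BW: "B0 \<subseteq> W"
  proof
    fix x assume x: "x \<in> B0"
    have "B \<inter> A0 = {}" using AB(4) by (auto simp: A0_def)
    then have "B \<inter> closure A0 = {}" using open_Int_closure_eq_empty[OF AB(2)] by blast
    then have "x \<notin> closure A0" using x by (auto simp: B0_def)
    then have "infdist x A0 \<noteq> 0" using in_closure_iff_infdist_zero[OF A0] by blast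
    then have "infdist x A0 > 0" using infdist_nonneg[of x A0] by linarith
    then show "x \<in> W" using x by (simp add: W_def)
  qed
  have "S \<subseteq> U \<union> W" using AU BW AB(3) by (auto simp: A0_def B0_def)
  moreover have "U \<inter> S \<noteq> {}" using AU A0 by (auto simp: A0_def)
  moreover have "W \<inter> S \<noteq> {}" using BW B0 by (auto simp: B0_def)
  ultimately show ?thesis using oU oW UW by (intro exI[of _ U] exI[of _ W]) simp
qed

lemma sep_interval:
  fixes J :: "real \<Rightarrow> real"
  assumes U: "open U" and W: "open W" and UW: "U \<inter> W = {}"
    and cov: "\<And>x. (x, J x) \<in> U \<union> W"
    and pa: "(a, J a) \<in> U" and pb: "(b, J b) \<in> W" and ab: "a < b"
  shows "\<exists>\<alpha> \<beta>. \<alpha> < \<beta> \<and> {\<alpha><..<\<beta>} \<subseteq> fst ` (- (U \<union> W))"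
proof (rule ccontr)
  assume neg: "\<not> ?thesis"
  have H: "\<exists>x. \<alpha> < x \<and> x < \<beta> \<and> (\<forall>y. (x, y) \<in> U \<union> W)" if "\<alpha> < \<beta>" for \<alpha> \<beta>
  proof -
    have "\<not> {\<alpha><..<\<beta>} \<subseteq> fst ` (- (U \<union> W))" using neg that by blast
    then obtain x where x: "x \<in> {\<alpha><..<\<beta>}" "x \<notin> fst ` (- (U \<union> W))"
      unfolding subset_iff by blast
    have "(x, y) \<in> U \<union> W" for y
    proof (rule ccontr)
      assume "(x, y) \<notin> U \<union> W"
      then have "x \<in> fst ` (- (U \<union> W))" by (auto intro!: image_eqI[of _ _ "(x, y)"])
      then show False using x(2) by blast
    qed
    then show ?thesis using x(1) by auto
  qed
  let ?free = "\<lambda>x. \<forall>y. (x, y) \<in> U \<union> W"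
  have color: "(\<forall>y. (x, y) \<in> U) \<or> (\<forall>y. (x, y) \<in> W)" if fx: "?free x" for x
  proof -
    let ?L = "range (\<lambda>y::real. (x, y))"
    have cL: "connected ?L"
      by (rule connected_continuous_image) (intro continuous_on_Pair continuous_on_const continuous_on_id, simp)
    have "?L \<subseteq> U \<union> W" using fx by auto
    moreover have "U \<inter> W \<inter> ?L = {}" using UW by auto
    ultimately have "U \<inter> ?L = {} \<or> W \<inter> ?L = {}" using connectedD[OF cL U W] by blast
    then show ?thesis
    proof
      assume "U \<inter> ?L = {}"
      then have "(x, y) \<notin> U" for y by auto
      then show ?thesis using fx by auto
    next
      assume "W \<inter> ?L = {}"
      then have "(x, y) \<notin> W" for y by auto
      then show ?thesis using fx by auto
    qed
  qed
  obtain e1 where e1: "e1 > 0" "ball (a, J a) e1 \<subseteq> U" using U pa open_contains_ball by blast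
  obtain e2 where e2: "e2 > 0" "ball (b, J b) e2 \<subseteq> W" using W pb open_contains_ball by blast
  define \<delta> where "\<delta> = min (min e1 e2) ((b - a) / 2)"
  have d1: "\<delta> > 0" using e1 e2 ab by (simp add: \<delta>_def)
  have d2: "\<delta> \<le> e1" "\<delta> \<le> e2" by (simp_all add: \<delta>_def)
  have d3: "\<delta> \<le> (b - a) / 2" unfolding \<delta>_def by (rule min.cobounded2)
  note \<delta> = d1 d2 d3
  have "a < a + \<delta>" "b - \<delta> < b" using d1 by simp_all
  obtain x1 where x1: "a < x1" "x1 < a + \<delta>" "?free x1" using H[OF \<open>a < a + \<delta>\<close>] by blast
  obtain x2 where x2: "b - \<delta> < x2" "x2 < b" "?free x2" using H[OF \<open>b - \<delta> < b\<close>] by blast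
  have x1U: "\<forall>y. (x1, y) \<in> U"
  proof -
    have "(x1, J a) \<in> ball (a, J a) e1" using x1 \<delta> by (simp add: dist_Pair_Pair dist_real_def)
    then have "(x1, J a) \<in> U" using e1 by blast
    then show ?thesis using color[OF x1(3)] UW by auto
  qed
  have x2W: "\<forall>y. (x2, y) \<in> W"
  proof -
    have "(x2, J b) \<in> ball (b, J b) e2" using x2 \<delta> by (simp add: dist_Pair_Pair dist_real_def)
    then have "(x2, J b) \<in> W" using e2 by blast
    then show ?thesis using color[OF x2(3)] UW by auto
  qed
  have x12: "x1 < x2" using x1(2) x2(1) d3 by (simp add: field_simps)
  define S where "S = {x. x1 \<le> x \<and> ?free x \<and> (\<forall>y. (x, y) \<in> W)}"
  have x2S: "x2 \<in> S" using x12 x2 x2W by (simp add: S_def)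
  have Sne: "S \<noteq> {}" using x2S by blast
  have bdd: "bdd_below S" unfolding S_def by (rule bdd_belowI[of _ x1]) simp
  define s where "s = Inf S"
  have x1s: "x1 \<le> s" unfolding s_def by (rule cInf_greatest[OF Sne]) (simp add: S_def)
  have clK: "closed (- (U \<union> W))" by (intro closed_Compl open_Un U W)
  have sK: "(s, y) \<notin> U \<union> W" for y
  proof -
    have "(s, y) \<in> closure (- (U \<union> W))"
      unfolding closure_approachable
    proof (intro allI impI)
      fix e :: real assume e: "e > 0"
      obtain v where v: "v \<in> S" "v < s + e" using cInf_lessD[OF Sne, of "s + e"] e by (auto simp: s_def)
      have sv: "s \<le> v" unfolding s_def by (rule cInf_lower[OF v(1) bdd])
      have vW: "(v, y) \<in> W" using v(1) by (simp add: S_def)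
      obtain u where u: "s - e < u" "u \<le> s" "(u, y) \<in> U"
      proof (cases "x1 < s")
        case True
        have "max x1 (s - e) < s" using True e by simp
        then obtain u where u: "max x1 (s - e) < u" "u < s" "?free u" using H by blast
        have "\<not> (\<forall>y. (u, y) \<in> W)"
        proof
          assume "\<forall>y. (u, y) \<in> W"
          then have "u \<in> S" using u by (simp add: S_def)
          then have "s \<le> u" unfolding s_def by (rule cInf_lower[OF _ bdd])
          then show False using u by simp
        qed
        then have "\<forall>y. (u, y) \<in> U" using color[OF u(3)] by blast
        then show ?thesis using that[of u] u by simp
      next
        case False
        then have "s = x1" using x1s by simp
        then show ?thesis using that[of x1] x1U e by simp
      qed
      have "u \<noteq> v" using u(3) vW UW by blast
      then have uv: "u < v" using u sv by simp
      have cC: "connected ((\<lambda>t. (t, y)) ` {u..v})"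
        by (rule connected_continuous_image[OF _ connected_Icc]) (intro continuous_on_Pair continuous_on_const continuous_on_id)
      obtain z where z: "z \<in> (\<lambda>t. (t, y)) ` {u..v}" "z \<notin> U \<union> W"
        using conn_cross[OF cC U W UW _ u(3) _ vW] uv by auto
      then obtain t where t: "t \<in> {u..v}" "z = (t, y)" by blast
      have "\<bar>t - s\<bar> < e" using t u v sv by (auto simp: abs_less_iff)
      then have "dist z (s, y) < e" using t by (simp add: dist_Pair_Pair dist_real_def)
      moreover have "z \<in> - (U \<union> W)" using z(2) by simp
      ultimately show "\<exists>z\<in>- (U \<union> W). dist z (s, y) < e" by blast
    qed
    then have "(s, y) \<in> - (U \<union> W)" unfolding closure_closed[OF clK] .
    then show ?thesis by simp
  qed
  show False using sK[of "J s"] cov[of s] by blast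
qed

lemma jones_connected:
  fixes J :: "real \<Rightarrow> real"
  assumes hit: "\<And>K. K \<in> jreq \<Longrightarrow> \<exists>x. (x, J x) \<in> K"
  shows "connected (range (\<lambda>x. (x, J x)))"
proof (rule ccontr)
  let ?\<Gamma> = "range (\<lambda>x. (x, J x))"
  assume nc: "\<not> connected ?\<Gamma>"
  obtain U W where UW0: "open U \<and> open W \<and> U \<inter> W = {} \<and> ?\<Gamma> \<subseteq> U \<union> W \<and> U \<inter> ?\<Gamma> \<noteq> {} \<and> W \<inter> ?\<Gamma> \<noteq> {}"
    using disjoint_opens[OF nc] by blast
  have UW: "open U" "open W" "U \<inter> W = {}" "?\<Gamma> \<subseteq> U \<union> W" "U \<inter> ?\<Gamma> \<noteq> {}" "W \<inter> ?\<Gamma> \<noteq> {}"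
    using UW0 by simp_all
  obtain a where a: "(a, J a) \<in> U" using UW(5) by auto
  obtain b where b: "(b, J b) \<in> W" using UW(6) by auto
  have cov: "(x, J x) \<in> U \<union> W" for x using UW(4) by auto
  have cov': "(x, J x) \<in> W \<union> U" for x using cov[of x] by auto
  have WU: "W \<inter> U = {}" using UW(3) by auto
  have "a \<noteq> b" using a b UW(3) by auto
  have ex: "\<exists>\<alpha> \<beta>. \<alpha> < \<beta> \<and> {\<alpha><..<\<beta>} \<subseteq> fst ` (- (U \<union> W))"
  proof (cases "a < b")
    case True
    show ?thesis by (rule sep_interval[OF UW(1,2,3) cov a b True])
  next
    case False
    then have ba: "b < a" using \<open>a \<noteq> b\<close> by simp
    have "\<exists>\<alpha> \<beta>. \<alpha> < \<beta> \<and> {\<alpha><..<\<beta>} \<subseteq> fst ` (- (W \<union> U))"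
      by (rule sep_interval[OF UW(2,1) WU cov' b a ba])
    then show ?thesis by (simp add: Un_commute)
  qed
  have cl: "closed (- (U \<union> W))" by (intro closed_Compl open_Un UW(1,2))
  have "- (U \<union> W) \<in> jreq" unfolding jreq_def using cl ex by simp
  then obtain x where "(x, J x) \<in> - (U \<union> W)" using hit by blast
  then show False using cov[of x] by simp
qed

lemma jones_dense:
  fixes J :: "real \<Rightarrow> real"
  assumes hit: "\<And>K. K \<in> jreq \<Longrightarrow> \<exists>x. (x, J x) \<in> K"
  shows "closure (range (\<lambda>x. (x, J x))) = UNIV"
proof -
  have "z \<in> closure (range (\<lambda>x. (x, J x)))" for z :: "real \<times> real"
    unfolding closure_approachable
  proof (intro allI impI)
    fix e :: real assume e: "e > 0"
    obtain x0 y0 where z: "z = (x0, y0)" by (cases z)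
    have "{x0 - e/2<..<x0 + e/2} \<subseteq> fst ` cball z (e/2)"
    proof
      fix t assume t: "t \<in> {x0 - e/2<..<x0 + e/2}"
      have "(t, y0) \<in> cball z (e/2)" using t by (auto simp: z dist_Pair_Pair dist_real_def abs_if)
      then show "t \<in> fst ` cball z (e/2)" by (auto intro!: image_eqI[of _ _ "(t, y0)"])
    qed
    moreover have "x0 - e/2 < x0 + e/2" using e by simp
    ultimately have "\<exists>a b. a < b \<and> {a<..<b} \<subseteq> fst ` cball z (e/2)" by blast
    then have "cball z (e/2) \<in> jreq" unfolding jreq_def by simp
    then obtain x where "(x, J x) \<in> cball z (e/2)" using hit by blast
    then have "dist (x, J x) z < e" using e by (simp add: dist_commute)
    then show "\<exists>y\<in>range (\<lambda>x. (x, J x)). dist y z < e" by blast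
  qed
  then show ?thesis by auto
qed



lemma span_finite_ne: "finite X \<Longrightarrow> qv.span X \<noteq> UNIV"
proof -
  assume "finite X"
  then have "X \<lesssim> (UNIV::nat set)" by (simp add: finite_lepoll_infinite)
  then have "qv.span X \<lesssim> (UNIV::nat set)" by (intro span_lepoll) auto
  then have "countable (qv.span X)" by (rule countable_lepoll[rotated]) simp
  then show ?thesis using uncountable_UNIV_real by auto
qed

lemma conn_zero:
  assumes S: "qv.subspace S" "S \<noteq> UNIV" and C: "connected C" "C \<subseteq> S" "0 \<in> C" and t: "t \<in> C"
  shows "t = (0::real)"
proof (rule ccontr)
  assume t0: "t \<noteq> 0"
  have ivl: "z \<in> C" if "min 0 t < z" "z < max 0 t" for z
  proof (cases "t < 0")
    case True
    then show ?thesis using C(1) t C(3) that unfolding connected_iff_interval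
      by (metis less_eq_real_def max.absorb1 min.absorb2)
  next
    case False
    then show ?thesis using C(1) t C(3) that unfolding connected_iff_interval
      by (metis less_eq_real_def linorder_not_le max.absorb2 min.absorb1)
  qed
  have "min 0 t < max 0 t" using t0 by (simp add: min_def max_def)
  moreover have "{min 0 t<..<max 0 t} \<subseteq> S" using ivl C(2) by auto
  ultimately have "S = UNIV" by (rule qsub_interval[OF S(1)])
  then show False using S(2) by contradiction
qed

lemma exists_full:
  "\<exists>f::'a::euclidean_space \<Rightarrow> real. Modules.additive f \<and>
     closure (connected_component_set {(x, f x) | x. True} 0) = UNIV"
proof -
  obtain J :: "real \<Rightarrow> real" where J: "Modules.additive J" "\<And>K. K \<in> jreq \<Longrightarrow> \<exists>x. (x, J x) \<in> K"
    using jones_exists by blast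
  obtain b0 :: 'a where b0: "b0 \<in> Basis" using nonempty_Basis by blast
  have nb: "b0 \<bullet> b0 = 1" using b0 by simp
  define f where "f x = J (x \<bullet> b0)" for x :: 'a
  have add: "Modules.additive f" unfolding Modules.additive_def f_def
    by (simp add: inner_add_left additive_add[OF J(1)])
  define \<Gamma> where "\<Gamma> = {(x, f x) | x. True}"
  define \<Phi> where "\<Phi> p = (snd p + (fst (fst p) - snd p \<bullet> b0) *\<^sub>R b0, snd (fst p))" for p :: "(real \<times> real) \<times> 'a"
  have cont: "continuous_on A \<Phi>" for A
    unfolding \<Phi>_def by (intro continuous_intros)
  have \<Phi>in: "\<Phi> ((t, J t), x) \<in> \<Gamma>" for t x
  proof -
    have "(x + (t - x \<bullet> b0) *\<^sub>R b0) \<bullet> b0 = t" using nb by (simp add: inner_add_left algebra_simps)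
    then show ?thesis unfolding \<Phi>_def \<Gamma>_def f_def by auto
  qed
  have img: "\<Phi> ` (range (\<lambda>t. (t, J t)) \<times> UNIV) = \<Gamma>"
  proof
    show "\<Phi> ` (range (\<lambda>t. (t, J t)) \<times> UNIV) \<subseteq> \<Gamma>" using \<Phi>in by auto
    show "\<Gamma> \<subseteq> \<Phi> ` (range (\<lambda>t. (t, J t)) \<times> UNIV)"
    proof
      fix z assume "z \<in> \<Gamma>"
      then obtain x where z: "z = (x, f x)" unfolding \<Gamma>_def by blast
      have "z = \<Phi> ((x \<bullet> b0, J (x \<bullet> b0)), x)" unfolding z \<Phi>_def f_def by simp
      then show "z \<in> \<Phi> ` (range (\<lambda>t. (t, J t)) \<times> UNIV)" by blast
    qed
  qed
  have conn: "connected \<Gamma>"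
  proof -
    have "connected (range (\<lambda>t. (t, J t)) \<times> (UNIV::'a set))"
      by (intro connected_Times jones_connected J(2) convex_connected convex_UNIV)
    then have "connected (\<Phi> ` (range (\<lambda>t. (t, J t)) \<times> UNIV))"
      by (rule connected_continuous_image[OF cont])
    then show ?thesis unfolding img .
  qed
  have z\<Gamma>: "0 \<in> \<Gamma>" using additive_zero[OF add] unfolding \<Gamma>_def
    by (auto intro!: exI[of _ 0] simp: zero_prod_def)
  have G: "connected_component_set \<Gamma> 0 = \<Gamma>" by (rule connected_component_eq_self[OF conn z\<Gamma>])
  have "\<Phi> ` closure (range (\<lambda>t. (t, J t)) \<times> UNIV) \<subseteq> closure \<Gamma>"
    by (rule image_closure_subset[OF cont closed_closure]) (simp add: img closure_subset)
  then have sub: "\<Phi> ` UNIV \<subseteq> closure \<Gamma>"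
    by (simp add: closure_Times jones_dense[OF J(2)])
  have "z \<in> closure \<Gamma>" for z
  proof -
    obtain x y where z: "z = (x, y)" by (cases z)
    have "z = \<Phi> ((x \<bullet> b0, y), x)" unfolding z \<Phi>_def by simp
    then show ?thesis using sub by blast
  qed
  then have "closure \<Gamma> = UNIV" by auto
  then show ?thesis using add G unfolding \<Gamma>_def by auto
qed



lemma exists_low:
  assumes s: "s \<le> DIM('a::euclidean_space)"
  shows "\<exists>f::'a \<Rightarrow> real. Modules.additive f \<and>
     dim (closure (connected_component_set {(x, f x) | x. True} 0)) = s"
proof -
  obtain D0 :: "'a set" where D0: "D0 \<subseteq> Basis" "card D0 = s"
    using obtain_subset_with_card_n[of s "Basis :: 'a set"] s by auto
  define E where "E = (Basis::'a set) - D0"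
  have finE: "finite E" by (simp add: E_def)
  define H where "H = qv.extend_basis {1::real}"
  have ind1: "qv.independent {1::real}" using qv.dependent_single[of "1::real"] by simp
  have indH: "qv.independent H" unfolding H_def by (rule qv.independent_extend_basis[OF ind1])
  have spH: "qv.span H = UNIV" unfolding H_def by (rule qv.span_extend_basis[OF ind1])
  have oneH: "1 \<in> H" unfolding H_def using qv.extend_basis_superset[OF ind1] by blast
  have infH: "infinite H" using span_finite_ne spH by blast
  obtain T where T: "finite T" "card T = card E" "T \<subseteq> H"
    using infinite_arbitrarily_large[OF infH] by blast
  obtain \<beta> where \<beta>: "bij_betw \<beta> E T" using finite_same_card_bij[OF finE T(1)] T(2) by auto
  have inj\<beta>: "inj_on \<beta> E" and \<beta>E: "\<beta> ` E = T" using \<beta> by (auto simp: bij_betw_def)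
  define r where "r t = qv.representation H t 1" for t
  have r_add: "r (u + v) = r u + r v" for u v
    unfolding r_def using qv.representation_add[OF indH, of v u] spH by simp
  have r_scale: "r (of_rat q * v) = q * r v" for q v
    unfolding r_def using qv.representation_scale[OF indH, of v q] spH by simp
  have r0: "r 0 = 0" unfolding r_def by (simp add: qv.representation_zero)
  have r1: "r 1 = 1" unfolding r_def using qv.representation_basis[OF indH oneH] by simp
  define f where "f x = (\<Sum>e\<in>E. of_rat (r (x \<bullet> e)) * \<beta> e)" for x :: 'a
  have add: "Modules.additive f" unfolding Modules.additive_def f_def
    by (simp add: inner_add_left r_add of_rat_add distrib_right sum.distrib)
  have frange: "f x \<in> qv.span T" for x
    unfolding f_def
  proof (rule qv.span_sum)
    fix e assume "e \<in> E"
    then have "\<beta> e \<in> qv.span T" using \<beta>E by (intro qv.span_base) blast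
    then show "of_rat (r (x \<bullet> e)) * \<beta> e \<in> qv.span T" by (rule qv.span_scale)
  qed
  have f0: "r (x \<bullet> e) = 0" if fx: "f x = 0" and e: "e \<in> E" for x e
  proof -
    define u where "u v = r (x \<bullet> inv_into E \<beta> v)" for v
    have "(\<Sum>v\<in>T. of_rat (u v) * v) = (\<Sum>e\<in>E. of_rat (u (\<beta> e)) * \<beta> e)"
      unfolding \<beta>E[symmetric] by (rule sum.reindex[OF inj\<beta>, unfolded comp_def])
    also have "\<dots> = f x" unfolding f_def u_def using inj\<beta> by (intro sum.cong refl) simp
    finally have "(\<Sum>v\<in>T. of_rat (u v) * v) = 0" using fx by simp
    then have "u (\<beta> e) = 0" using qv.independentD[OF indH T(1) T(3)] e \<beta>E by blast
    then show ?thesis unfolding u_def using inj\<beta> e by simp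
  qed
  define \<Gamma> where "\<Gamma> = {(x, f x) | x. True}"
  define G where "G = connected_component_set \<Gamma> 0"
  define S0 where "S0 = {z :: 'a \<times> real. snd z = 0 \<and> (\<forall>e\<in>E. fst z \<bullet> e = 0)}"
  have subS0: "subspace S0" unfolding subspace_def S0_def
    by (auto simp: inner_add_left)
  have S0\<Gamma>: "S0 \<subseteq> \<Gamma>"
  proof
    fix z assume z: "z \<in> S0"
    have "f (fst z) = 0" unfolding f_def using z r0 by (simp add: S0_def)
    then have "z = (fst z, f (fst z))" using z by (simp add: S0_def prod_eq_iff)
    then show "z \<in> \<Gamma>" unfolding \<Gamma>_def by blast
  qed
  have "S0 \<subseteq> G" unfolding G_def
  proof (rule connected_component_maximal)
    show "0 \<in> S0" by (simp add: S0_def)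
    show "connected S0" by (rule convex_connected[OF subspace_imp_convex[OF subS0]])
  qed (rule S0\<Gamma>)
  moreover have "G \<subseteq> S0"
  proof
    fix z assume zG: "z \<in> G"
    have G\<Gamma>: "G \<subseteq> \<Gamma>" unfolding G_def by (rule connected_component_subset)
    have cG: "connected G" unfolding G_def by simp
    have z\<Gamma>: "0 \<in> \<Gamma>" using additive_zero[OF add] unfolding \<Gamma>_def
      by (auto intro!: exI[of _ 0] simp: zero_prod_def)
    have 0: "0 \<in> G" unfolding G_def using z\<Gamma> by simp
    have sndG: "snd w = 0" if w: "w \<in> G" for w
    proof (rule conn_zero[OF qv.subspace_span span_finite_ne[OF T(1)]])
      show "connected (snd ` G)" by (rule connected_continuous_image[OF continuous_on_snd[OF continuous_on_id] cG])
      show "snd ` G \<subseteq> qv.span T" using G\<Gamma> frange unfolding \<Gamma>_def by auto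
      show "0 \<in> snd ` G" using 0 by force
      show "snd w \<in> snd ` G" using w by blast
    qed
    have fG: "f (fst w) = 0" if w: "w \<in> G" for w
    proof -
      obtain x where "w = (x, f x)" using w G\<Gamma> unfolding \<Gamma>_def by blast
      then show ?thesis using sndG[OF w] by simp
    qed
    have K0: "qv.subspace {t. r t = 0}"
      unfolding qv.subspace_def using r0 r_add r_scale by auto
    have K0ne: "{t. r t = 0} \<noteq> UNIV"
    proof
      assume "{t. r t = 0} = UNIV"
      then have "(1::real) \<in> {t. r t = 0}" by simp
      then show False using r1 by simp
    qed
    have "fst z \<bullet> e = 0" if e: "e \<in> E" for e
    proof (rule conn_zero[OF K0 K0ne])
      show "connected ((\<lambda>w. fst w \<bullet> e) ` G)"
        by (rule connected_continuous_image[OF _ cG]) (intro continuous_intros)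
      show "(\<lambda>w. fst w \<bullet> e) ` G \<subseteq> {t. r t = 0}" using f0[OF fG e] by auto
      show "0 \<in> (\<lambda>w. fst w \<bullet> e) ` G" using 0 by force
      show "fst z \<bullet> e \<in> (\<lambda>w. fst w \<bullet> e) ` G" using zG by blast
    qed
    then show "z \<in> S0" using sndG[OF zG] by (simp add: S0_def)
  qed
  ultimately have GS: "G = S0" by blast
  have clS: "closed S0" by (rule closed_subspace[OF subS0])
  define D where "D = (\<lambda>b. (b, 0::real)) ` D0"
  have DB: "D \<subseteq> Basis" using D0(1) by (auto simp: D_def Basis_prod_def)
  have cardD: "card D = s" unfolding D_def using D0(2) by (simp add: card_image inj_on_def)
  have S0eq: "S0 = {z. \<forall>i\<in>Basis. i \<notin> D \<longrightarrow> z \<bullet> i = 0}"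
  proof (intro set_eqI iffI)
    fix z :: "'a \<times> real"
    assume z: "z \<in> S0"
    show "z \<in> {z. \<forall>i\<in>Basis. i \<notin> D \<longrightarrow> z \<bullet> i = 0}"
      using z by (auto simp: S0_def D_def Basis_prod_def E_def inner_Pair_0)
  next
    fix z :: "'a \<times> real"
    assume z: "z \<in> {z. \<forall>i\<in>Basis. i \<notin> D \<longrightarrow> z \<bullet> i = 0}"
    have "snd z = 0"
    proof -
      have "(0::'a, 1::real) \<in> Basis" by (simp add: Basis_prod_def)
      moreover have "(0::'a, 1::real) \<notin> D" by (auto simp: D_def)
      ultimately have "z \<bullet> (0, 1) = 0" using z by blast
      then show ?thesis by (simp add: inner_Pair_0)
    qed
    moreover have "fst z \<bullet> e = 0" if "e \<in> E" for e
    proof -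
      have "(e, 0::real) \<in> Basis" using that by (simp add: Basis_prod_def E_def)
      moreover have "(e, 0::real) \<notin> D" using that by (auto simp: D_def E_def)
      ultimately have "z \<bullet> (e, 0) = 0" using z by blast
      then show ?thesis by (simp add: inner_Pair_0)
    qed
    ultimately show "z \<in> S0" by (simp add: S0_def)
  qed
  have "dim (closure G) = s" unfolding GS closure_closed[OF clS] S0eq
    using dim_substandard[OF DB] cardD by simp
  then show ?thesis using add unfolding G_def \<Gamma>_def by blast
qed


lemma comp_struct_closure:
  fixes f :: "real^'n \<Rightarrow> real"
  assumes add: "Modules.additive f"
  shows "comp_struct f (dim (closure (connected_component_set (fgraph f) 0)))
           (closure (connected_component_set (fgraph f) 0))"
proof -
  have P: "subspace (closure (connected_component_set (fgraph f) 0)) \<and>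
     connected_component_set (fgraph f) 0 \<subseteq> closure (connected_component_set (fgraph f) 0) \<and>
     0 \<in> connected_component_set (fgraph f) 0 \<and>
     (\<forall>x\<in>connected_component_set (fgraph f) 0. \<forall>y\<in>connected_component_set (fgraph f) 0. x + y \<in> connected_component_set (fgraph f) 0)
     \<and> (\<forall>x\<in>connected_component_set (fgraph f) 0. - x \<in> connected_component_set (fgraph f) 0)
     \<and> (\<forall>C\<in>components (fgraph f). \<exists>\<tau>. C = (\<lambda>g. \<tau> + g) ` connected_component_set (fgraph f) 0)"
    using part_a_generic[OF add] unfolding fgraph_def .
  show ?thesis unfolding comp_struct_def Let_def using P by blast
qed

theorem theorem3:
  shows "(\<forall>f :: real^'n \<Rightarrow> real. Modules.additive f \<longrightarrow>
            (\<exists>s \<le> CARD('n) + 1. \<exists>V. comp_struct f s V))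
       \<and> (\<forall>s \<le> CARD('n) + 1. \<exists>f :: real^'n \<Rightarrow> real. Modules.additive f \<and> (\<exists>V. comp_struct f s V))"
proof (intro conjI allI impI)
  fix f :: "real^'n \<Rightarrow> real" assume add: "Modules.additive f"
  let ?V = "closure (connected_component_set (fgraph f) 0)"
  have "dim ?V \<le> DIM((real^'n) \<times> real)" by (rule dim_subset_UNIV)
  then have "dim ?V \<le> CARD('n) + 1" by simp
  then show "\<exists>s \<le> CARD('n) + 1. \<exists>V. comp_struct f s V" using comp_struct_closure[OF add] by blast
next
  fix s :: nat assume s: "s \<le> CARD('n) + 1"
  show "\<exists>f :: real^'n \<Rightarrow> real. Modules.additive f \<and> (\<exists>V. comp_struct f s V)"
  proof (cases "s = CARD('n) + 1")
    case True
    obtain f :: "real^'n \<Rightarrow> real" where f: "Modules.additive f"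
      "closure (connected_component_set {(x, f x) | x. True} 0) = UNIV"
      using exists_full by blast
    have "dim (closure (connected_component_set (fgraph f) 0)) = s"
      using f(2) True unfolding fgraph_def by simp
    then have "comp_struct f s (closure (connected_component_set (fgraph f) 0))"
      using comp_struct_closure[OF f(1)] by simp
    then show ?thesis using f(1) by blast
  next
    case False
    then have "s \<le> DIM(real^'n)" using s by simp
    then obtain f :: "real^'n \<Rightarrow> real" where f: "Modules.additive f"
      "dim (closure (connected_component_set {(x, f x) | x. True} 0)) = s"
      using exists_low by blast
    then have "comp_struct f s (closure (connected_component_set (fgraph f) 0))"
      using comp_struct_closure[OF f(1)] unfolding fgraph_def by simp
    then show ?thesis using f(1) by blast
  qed
qed

end
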